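(* For $m=1,\dots,d$, let $F_m$ be a cumulative distribution function with $F_m(x)=0$ for $x\le 0$, and let $k_m(r)=\int_0^\infty\max\{0,1-|r|/x\}\,dF_m(x)$. Define the tensor-product kernel $k(u)=\prod_{m=1}^d k_m(u_m)$ for $u=(u_1,\dots,u_d)\in\mathbb{R}^d$. Let $x_1,\dots,x_n\in\mathbb{R}^d$ and $K_{ij}=k(x_i-x_j)$. For each $l=1,\dots,D$, draw independently (across $l$ and $m$) $w^{(l)}_m\sim F_m$ and, conditionally on $w^{(l)}_m$, $b^{(l)}_m\sim\mathcal{U}(0,w^{(l)}_m)$; this defines a random grid on $\mathbb{R}^d$ whose bins are the boxes $\prod_{m=1}^d[b^{(l)}_m+j_m w^{(l)}_m,\,b^{(l)}_m+(j_m+1)w^{(l)}_m)$, $j_m\in\mathbb{Z}$. Let $\widetilde{K}^{(l)}_{ij}=1$ if $x_i$ and $x_j$ lie in the same bin of the $l$-th grid and $\widetilde{K}^{(l)}_{ij}=0$ otherwise. Then \[ E\Big[\tfrac{1}{D}\textstyle\sum_{l=1}^D\widetilde{K}^{(l)}\Big]=K,\qquad E\left[\Big\|\tfrac{1}{D}\textstyle\sum_{l=1}^D\widetilde{K}^{(l)}-K\Big\|_F^2\right]=\tfrac{1}{D}\Big(\textstyle\sum_{i,j=1}^n K_{ij}-\|K\|_F^2\Big). \]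
   Context: This is the random binning feature map: $z(x)$ is the indicator vector of the grid bin containing $x$, and $\widetilde{K}_{ij}=\langle z(x_i),z(x_j)\rangle$. $\|\cdot\|_F$ denotes the Frobenius norm. *)

theory Defs
  imports "HOL-Probability.Probability"
begin

text \<open>The one-dimensional kernel k_m(r) = int_0^infty max(0, 1 - |r|/x) dF_m(x),
  where the distribution F_m is given as a real probability measure (its cdf is F_m).\<close>
definition km :: "real measure \<Rightarrow> real \<Rightarrow> real" where
  "km F r = (\<integral>x. (if 0 < x then max 0 (1 - \<bar>r\<bar> / x) else 0) \<partial>F)"

definition tkernel :: "('d::finite \<Rightarrow> real measure) \<Rightarrow> real^'d \<Rightarrow> real" where
  "tkernel F u = (\<Prod>m\<in>UNIV. km (F m) (u $ m))"

definition wb_dist :: "real measure \<Rightarrow> (real \<times> real) measure" where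
  "wb_dist F = F \<bind> (\<lambda>w. distr (uniform_measure lborel {0<..<w}) borel (\<lambda>b. (w, b)))"

definition grid_bin :: "('d::finite \<Rightarrow> real) \<Rightarrow> ('d \<Rightarrow> real) \<Rightarrow> ('d \<Rightarrow> int) \<Rightarrow> (real^'d) set" where
  "grid_bin w b j = {y. \<forall>m. b m + of_int (j m) * w m \<le> y $ m \<and> y $ m < b m + (of_int (j m) + 1) * w m}"

definition same_bin :: "('d::finite \<Rightarrow> real) \<Rightarrow> ('d \<Rightarrow> real) \<Rightarrow> real^'d \<Rightarrow> real^'d \<Rightarrow> bool" where
  "same_bin w b x y = (\<exists>j. x \<in> grid_bin w b j \<and> y \<in> grid_bin w b j)"

definition grid_space :: "('d::finite \<Rightarrow> real measure) \<Rightarrow> nat \<Rightarrow> (nat \<times> 'd \<Rightarrow> real \<times> real) measure" where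
  "grid_space F D = (\<Pi>\<^sub>M lm\<in>{..<D} \<times> UNIV. wb_dist (F (snd lm)))"

definition Ktilde :: "(nat \<times> 'd::finite \<Rightarrow> real \<times> real) \<Rightarrow> nat \<Rightarrow> real^'d \<Rightarrow> real^'d \<Rightarrow> real" where
  "Ktilde \<omega> l x y = (if same_bin (\<lambda>m. fst (\<omega> (l, m))) (\<lambda>m. snd (\<omega> (l, m))) x y then 1 else 0)"

end

theory Submission
  imports Defs
begin

definition ker :: "real \<Rightarrow> (real \<times> real) measure" where
  "ker w = distr (uniform_measure lborel {0<..<w}) borel (\<lambda>b. (w, b))"

lemma sets_ker[simp, measurable_cong]: "sets (ker w) = sets borel"
  by (simp add: ker_def)

lemma Pair_borel[simp]:
  assumes X: "X \<in> sets (borel :: (real \<times> real) measure)"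
  shows "Pair w -` X \<in> sets (borel::real measure)"
proof -
    have "Pair w -` X = (\<lambda>b. (w, b)) -` X \<inter> space borel" by auto
    also have "\<dots> \<in> sets borel"
      by (rule measurable_sets[OF _ X]) measurable
    finally show ?thesis .
qed

lemma tri_borel[measurable]: "{p::real\<times>real. 0 < snd p \<and> snd p < fst p} \<in> sets borel"
proof -
  have "open {p::real\<times>real. 0 < snd p \<and> snd p < fst p}"
    by (intro open_Collect_conj open_Collect_less continuous_intros)
  then show ?thesis by (rule borel_open)
qed

lemma emeasure_ker:
  assumes X: "X \<in> sets borel"
  shows "emeasure (ker w) X = emeasure lborel (Pair w -` (X \<inter> {p. 0 < snd p \<and> snd p < fst p})) / ennreal (max 0 w)"
proof -
  have "emeasure (ker w) X = emeasure (uniform_measure lborel {0<..<w}) ((\<lambda>b. (w, b)) -` X)"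
    unfolding ker_def using X by (subst emeasure_distr) auto
  also have "\<dots> = emeasure lborel ({0<..<w} \<inter> ((\<lambda>b. (w, b)) -` X)) / emeasure lborel {0<..<w}"
    using X by (subst emeasure_uniform_measure) auto
  also have "{0<..<w} \<inter> ((\<lambda>b. (w, b)) -` X) = Pair w -` (X \<inter> {p. 0 < snd p \<and> snd p < fst p})"
    by auto
  also have "emeasure lborel {0<..<w} = ennreal (max 0 w)"
    by (cases "0 \<le> w") auto
  finally show ?thesis .
qed

lemma subprob_ker: "subprob_space (ker w)"
proof
  show "space (ker w) \<noteq> {}" by (simp add: ker_def)
  have "emeasure (ker w) (space (ker w)) = emeasure lborel {0<..<w} / emeasure lborel {0<..<w}"
    unfolding ker_def by (subst emeasure_distr) (auto simp: emeasure_uniform_measure)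
  also have "\<dots> \<le> 1"
    by (cases "0 < w") (auto simp: ennreal_divide_self)
  finally show "emeasure (ker w) (space (ker w)) \<le> 1" .
qed

lemma prob_ker: "0 < w \<Longrightarrow> prob_space (ker w)"
proof
  assume w: "0 < w"
  have "emeasure (ker w) (space (ker w)) = emeasure lborel {0<..<w} / emeasure lborel {0<..<w}"
    unfolding ker_def by (subst emeasure_distr) (auto simp: emeasure_uniform_measure)
  also have "\<dots> = 1"
    using w by (auto simp: ennreal_divide_self)
  finally show "emeasure (ker w) (space (ker w)) = 1" .
qed

lemma measurable_ker: "ker \<in> measurable borel (subprob_algebra borel)"
proof (rule measurable_subprob_algebra)
  fix A :: "(real \<times> real) set" assume A: "A \<in> sets borel"
  have Q: "A \<inter> {p. 0 < snd p \<and> snd p < fst p} \<in> sets (borel \<Otimes>\<^sub>M lborel)"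
  proof -
    have "sets (borel \<Otimes>\<^sub>M (lborel::real measure)) = sets (borel \<Otimes>\<^sub>M (borel::real measure))"
      by (rule sets_pair_measure_cong) auto
    also have "\<dots> = sets (borel :: (real \<times> real) measure)" by (simp only: borel_prod)
    finally show ?thesis using A tri_borel by auto
  qed
  have "(\<lambda>w. emeasure lborel (Pair w -` (A \<inter> {p. 0 < snd p \<and> snd p < fst p}))) \<in> borel_measurable borel"
    by (rule lborel.measurable_emeasure_Pair[OF Q])
  moreover have "(\<lambda>w::real. ennreal (max 0 w)) \<in> borel_measurable borel" by measurable
  ultimately show "(\<lambda>w. emeasure (ker w) A) \<in> borel_measurable borel"
    by (subst emeasure_ker[OF A]) (rule borel_measurable_divide_ennreal)
qed (auto simp: subprob_ker)

lemma floor_split: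
  fixes w s b :: real
  assumes w: "0 < w"
  shows "\<lfloor>(s - b) / w\<rfloor> = \<lfloor>s / w\<rfloor> + \<lfloor>(s - w * \<lfloor>s / w\<rfloor> - b) / w\<rfloor>"
proof -
  have "(s - b) / w = (s - w * \<lfloor>s / w\<rfloor> - b) / w + of_int \<lfloor>s / w\<rfloor>"
    using w by (simp add: field_simps)
  then show ?thesis by simp
qed

lemma good_set_measure_le:
  fixes w s t :: real
  assumes w: "0 < w" and st: "s \<le> t"
  shows "emeasure lborel {b\<in>{0<..<w}. \<lfloor>(s - b) / w\<rfloor> = \<lfloor>(t - b) / w\<rfloor>} = ennreal (max 0 (w - (t - s)))"
proof (cases "w \<le> t - s")
  case True
  have "{b\<in>{0<..<w}. \<lfloor>(s - b) / w\<rfloor> = \<lfloor>(t - b) / w\<rfloor>} = {}"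
  proof safe
    fix b assume "b \<in> {0<..<w}" and eq: "\<lfloor>(s - b) / w\<rfloor> = \<lfloor>(t - b) / w\<rfloor>"
    have "(s - b) / w + 1 = (s - b + w) / w" using w by (simp add: field_simps)
    also have "\<dots> \<le> (t - b) / w" using True w by (intro divide_right_mono) auto
    finally have "(s - b) / w + 1 \<le> (t - b) / w" .
    then have "\<lfloor>(s - b) / w + 1\<rfloor> \<le> \<lfloor>(t - b) / w\<rfloor>" by (rule floor_mono)
    with eq show "b \<in> {}" by simp
  qed
  then show ?thesis using True by (simp del: Collect_empty_eq)
next
  case False
  define q where "q = \<lfloor>s / w\<rfloor>"
  define a where "a = s - w * q"
  define r where "r = t - s"
  have a0: "0 \<le> a" and aw: "a < w"
  proof -
    have "of_int q \<le> s / w" "s / w < of_int q + 1" unfolding q_def by linarith+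
    then show "0 \<le> a" "a < w" unfolding a_def using w by (simp_all add: field_simps)
  qed
  have r0: "0 \<le> r" and rw: "r < w" using st False by (auto simp: r_def)
  have fs: "\<lfloor>(s - b) / w\<rfloor> = q + (if b \<le> a then 0 else -1)" if b: "0 < b" "b < w" for b
  proof -
    have "\<lfloor>(s - b) / w\<rfloor> = q + \<lfloor>(a - b) / w\<rfloor>"
      unfolding a_def q_def by (rule floor_split[OF w])
    moreover have "\<lfloor>(a - b) / w\<rfloor> = (if b \<le> a then 0 else -1)"
      using b a0 aw w by (auto simp: floor_eq_iff field_simps)
    ultimately show ?thesis by simp
  qed
  have ft: "\<lfloor>(t - b) / w\<rfloor> = q + (if b \<le> a + r - w then 1 else if b \<le> a + r then 0 else -1)"
    if b: "0 < b" "b < w" for b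
  proof -
    have "\<lfloor>(t - b) / w\<rfloor> = \<lfloor>t / w\<rfloor> + \<lfloor>(t - w * \<lfloor>t / w\<rfloor> - b) / w\<rfloor>"
      by (rule floor_split[OF w])
    have "(t - b) / w = (a + r - b) / w + of_int q"
      using w unfolding a_def r_def by (simp add: field_simps)
    then have "\<lfloor>(t - b) / w\<rfloor> = q + \<lfloor>(a + r - b) / w\<rfloor>" by simp
    moreover have "\<lfloor>(a + r - b) / w\<rfloor> = (if b \<le> a + r - w then 1 else if b \<le> a + r then 0 else -1)"
      using b a0 aw w r0 rw by (auto simp: floor_eq_iff field_simps)
    ultimately show ?thesis by simp
  qed
  have S: "{b\<in>{0<..<w}. \<lfloor>(s - b) / w\<rfloor> = \<lfloor>(t - b) / w\<rfloor>}
      = {b. 0 < b \<and> b < w \<and> ((a + r - w < b \<and> b \<le> a) \<or> a + r < b)}"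
  proof -
    have "\<lfloor>(s - b) / w\<rfloor> = \<lfloor>(t - b) / w\<rfloor> \<longleftrightarrow> ((a + r - w < b \<and> b \<le> a) \<or> a + r < b)"
      if "0 < b" "b < w" for b
      using fs[OF that] ft[OF that] r0 rw by auto
    then show ?thesis by auto
  qed
  show ?thesis
  proof (cases "a + r \<le> w")
    case True
    have "{b. 0 < b \<and> b < w \<and> ((a + r - w < b \<and> b \<le> a) \<or> a + r < b)} = {0<..a} \<union> {a+r<..<w}"
      using True r0 a0 aw by auto
    moreover have "emeasure lborel ({0<..a} \<union> {a+r<..<w}) = emeasure lborel {0<..a} + emeasure lborel {a+r<..<w}"
      using r0 by (intro plus_emeasure[symmetric]) auto
    moreover have "emeasure lborel {0<..a} + emeasure lborel {a+r<..<w} = ennreal (max 0 (w - (t - s)))"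
      using True r0 a0 by (simp add: ennreal_plus[symmetric] r_def del: ennreal_plus)
    ultimately show ?thesis using S by simp
  next
    case False
    have "{b. 0 < b \<and> b < w \<and> ((a + r - w < b \<and> b \<le> a) \<or> a + r < b)} = {a+r-w<..a}"
      using False r0 a0 aw rw by auto
    moreover have "emeasure lborel {a+r-w<..a} = ennreal (max 0 (w - (t - s)))"
      using rw by (simp add: r_def)
    ultimately show ?thesis using S by simp
  qed
qed

lemma good_set_measure:
  fixes w s t :: real
  assumes w: "0 < w"
  shows "emeasure lborel {b\<in>{0<..<w}. \<lfloor>(s - b) / w\<rfloor> = \<lfloor>(t - b) / w\<rfloor>} = ennreal (max 0 (w - \<bar>s - t\<bar>))"
proof (cases "s \<le> t")
  case True then show ?thesis using good_set_measure_le[OF w True] by simp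
next
  case False
  then have "t \<le> s" by simp
  from good_set_measure_le[OF w this] show ?thesis using False
    by (simp add: eq_commute[of "\<lfloor>(t - _) / w\<rfloor>"])
qed

definition hh :: "real \<Rightarrow> real \<Rightarrow> real \<times> real \<Rightarrow> real" where
  "hh s t p = (if 0 < fst p \<and> \<lfloor>(s - snd p) / fst p\<rfloor> = \<lfloor>(t - snd p) / fst p\<rfloor> then 1 else 0)"

lemma hh_measurable[measurable]: "hh s t \<in> borel_measurable borel"
proof -
  have "hh s t \<in> borel_measurable (borel \<Otimes>\<^sub>M borel)"
    unfolding hh_def by measurable
  then show ?thesis by (simp only: borel_prod)
qed

lemma nn_ker:
  "(\<integral>\<^sup>+p. ennreal (hh s t p) \<partial>ker w) = ennreal (if 0 < w then max 0 (1 - \<bar>s - t\<bar> / w) else 0)"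
proof -
  have "(\<integral>\<^sup>+p. ennreal (hh s t p) \<partial>ker w) = (\<integral>\<^sup>+b. ennreal (hh s t (w, b)) \<partial>uniform_measure lborel {0<..<w})"
    unfolding ker_def by (subst nn_integral_distr) auto
  also have "\<dots> = (\<integral>\<^sup>+b. ennreal (hh s t (w, b)) * indicator {0<..<w} b \<partial>lborel) / emeasure lborel {0<..<w}"
    by (rule nn_integral_uniform_measure) auto
  also have "\<dots> = ennreal (if 0 < w then max 0 (1 - \<bar>s - t\<bar> / w) else 0)"
  proof (cases "0 < w")
    case True
    have "(\<integral>\<^sup>+b. ennreal (hh s t (w, b)) * indicator {0<..<w} b \<partial>lborel)
        = (\<integral>\<^sup>+b. indicator {b\<in>{0<..<w}. \<lfloor>(s - b) / w\<rfloor> = \<lfloor>(t - b) / w\<rfloor>} b \<partial>lborel)"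
      using True by (intro nn_integral_cong) (auto simp: hh_def indicator_def)
    also have "\<dots> = emeasure lborel {b\<in>{0<..<w}. \<lfloor>(s - b) / w\<rfloor> = \<lfloor>(t - b) / w\<rfloor>}"
      by (rule nn_integral_indicator) measurable
    also have "\<dots> = ennreal (max 0 (w - \<bar>s - t\<bar>))"
      by (rule good_set_measure[OF True])
    finally show ?thesis using True
      by (simp add: divide_ennreal max_def field_simps)
  next
    case False
    have "(\<integral>\<^sup>+b. ennreal (hh s t (w, b)) * indicator {0<..<w} b \<partial>lborel) = 0"
      using False by (simp add: hh_def)
    then show ?thesis using False by simp
  qed
  finally show ?thesis .
qed

lemma wb_eq: "wb_dist F = F \<bind> ker"
  unfolding wb_dist_def ker_def[abs_def] ..

lemma measurable_ker': "sets F = sets borel \<Longrightarrow> ker \<in> measurable F (subprob_algebra borel)"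
  using measurable_ker by (simp cong: measurable_cong_sets)

lemma sets_wb[simp, measurable_cong]: "real_distribution F \<Longrightarrow> sets (wb_dist F) = sets borel"
  unfolding wb_eq
  by (rule sets_bind) (auto simp: real_distribution.events_eq_borel prob_space.not_empty real_distribution_def)

lemma prob_wb:
  assumes F: "real_distribution F" and c: "cdf F 0 = 0"
  shows "prob_space (wb_dist F)"
proof -
  interpret real_distribution F by (rule F)
  have "emeasure F {..0} = 0"
    using c by (simp add: cdf_def emeasure_eq_measure)
  then have "{..0} \<in> null_sets F" by (simp add: null_sets_def)
  then have "AE w in F. 0 < w"
    by (rule AE_I') auto
  then have "AE w in F. prob_space (ker w)"
    by eventually_elim (rule prob_ker)
  then show ?thesis unfolding wb_eq
    by (rule prob_space_bind) (rule measurable_ker'[OF events_eq_borel])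
qed

lemma int_hh:
  assumes F: "real_distribution F"
  shows "integral\<^sup>L (wb_dist F) (hh s t) = km F (s - t)"
proof -
  interpret real_distribution F by (rule F)
  define g where "g w = (if 0 < w then max 0 (1 - \<bar>s - t\<bar> / w) else 0)" for w :: real
  have gm: "g \<in> borel_measurable borel" unfolding g_def by measurable
  have "integral\<^sup>L (wb_dist F) (hh s t) = enn2real (\<integral>\<^sup>+p. ennreal (hh s t p) \<partial>wb_dist F)"
    by (rule integral_eq_nn_integral) (auto simp: F hh_def)
  also have "(\<integral>\<^sup>+p. ennreal (hh s t p) \<partial>wb_dist F) = (\<integral>\<^sup>+w. \<integral>\<^sup>+p. ennreal (hh s t p) \<partial>ker w \<partial>F)"
    unfolding wb_eq by (rule nn_integral_bind[OF _ measurable_ker'[OF events_eq_borel]]) measurable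
  also have "\<dots> = (\<integral>\<^sup>+w. ennreal (g w) \<partial>F)"
    by (simp add: nn_ker g_def)
  also have "enn2real \<dots> = integral\<^sup>L F g"
    by (rule integral_eq_nn_integral[symmetric]) (auto simp: g_def gm)
  also have "\<dots> = km F (s - t)"
    unfolding km_def g_def by simp
  finally show ?thesis .
qed

lemma cell_iff:
  fixes w b z :: real and j :: int
  assumes "0 < w"
  shows "(b + of_int j * w \<le> z \<and> z < b + (of_int j + 1) * w) \<longleftrightarrow> j = \<lfloor>(z - b) / w\<rfloor>"
proof -
  have "j = \<lfloor>(z - b) / w\<rfloor> \<longleftrightarrow> of_int j \<le> (z - b) / w \<and> (z - b) / w < of_int j + 1"
    by (subst eq_commute) (rule floor_eq_iff)
  also have "\<dots> \<longleftrightarrow> of_int j * w \<le> z - b \<and> z - b < (of_int j + 1) * w"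
    using assms by (simp add: pos_le_divide_eq pos_divide_less_eq)
  finally show ?thesis by linarith
qed

lemma cell_neg:
  fixes w b z :: real and j :: int
  assumes "\<not> 0 < w"
  shows "\<not> (b + of_int j * w \<le> z \<and> z < b + (of_int j + 1) * w)"
  using assms by (auto simp: algebra_simps)

lemma same_bin_iff:
  "same_bin w b x y \<longleftrightarrow> (\<forall>m. 0 < w m \<and> \<lfloor>(x $ m - b m) / w m\<rfloor> = \<lfloor>(y $ m - b m) / w m\<rfloor>)"
proof
  assume "same_bin w b x y"
  then obtain j where x: "x \<in> grid_bin w b j" and y: "y \<in> grid_bin w b j"
    unfolding same_bin_def by blast
  show "\<forall>m. 0 < w m \<and> \<lfloor>(x $ m - b m) / w m\<rfloor> = \<lfloor>(y $ m - b m) / w m\<rfloor>"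
  proof
    fix m
    have cx: "b m + of_int (j m) * w m \<le> x $ m \<and> x $ m < b m + (of_int (j m) + 1) * w m"
      using x unfolding grid_bin_def by blast
    have cy: "b m + of_int (j m) * w m \<le> y $ m \<and> y $ m < b m + (of_int (j m) + 1) * w m"
      using y unfolding grid_bin_def by blast
    have w: "0 < w m" using cx cell_neg by blast
    show "0 < w m \<and> \<lfloor>(x $ m - b m) / w m\<rfloor> = \<lfloor>(y $ m - b m) / w m\<rfloor>"
      using w cx cy cell_iff[OF w] by metis
  qed
next
  assume H: "\<forall>m. 0 < w m \<and> \<lfloor>(x $ m - b m) / w m\<rfloor> = \<lfloor>(y $ m - b m) / w m\<rfloor>"
  define j where "j m = \<lfloor>(x $ m - b m) / w m\<rfloor>" for m
  have "x \<in> grid_bin w b j" "y \<in> grid_bin w b j"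
    unfolding grid_bin_def j_def using H cell_iff by auto
  then show "same_bin w b x y" unfolding same_bin_def by blast
qed

lemma Ktilde_prod:
  "Ktilde \<omega> l s t = (\<Prod>m\<in>UNIV. hh (s $ m) (t $ m) (\<omega> (l, m)))"
proof -
  have "(\<Prod>m\<in>UNIV. hh (s $ m) (t $ m) (\<omega> (l, m)))
     = (if (\<forall>m. 0 < fst (\<omega> (l, m)) \<and> \<lfloor>(s $ m - snd (\<omega> (l, m))) / fst (\<omega> (l, m))\<rfloor> = \<lfloor>(t $ m - snd (\<omega> (l, m))) / fst (\<omega> (l, m))\<rfloor>) then 1 else 0)"
    unfolding hh_def by (auto intro: prod.neutral)
  then show ?thesis unfolding Ktilde_def same_bin_iff by simp
qed

lemma Ktilde_01: "Ktilde \<omega> l s t = 0 \<or> Ktilde \<omega> l s t = 1"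
  unfolding Ktilde_def by auto

lemma grid_facts:
  fixes F :: "'d::finite \<Rightarrow> real measure"
  assumes F: "\<And>m. real_distribution (F m)" and c: "\<And>m. cdf (F m) 0 = 0"
  shows "product_prob_space (\<lambda>lm::nat \<times> 'd. wb_dist (F (snd lm)))"
    and "prob_space (grid_space F D)"
proof -
  have p: "prob_space (wb_dist (F (snd lm)))" for lm using prob_wb[OF F c] .
  then show "product_prob_space (\<lambda>lm::nat \<times> 'd. wb_dist (F (snd lm)))"
    unfolding product_prob_space_def product_prob_space_axioms_def product_sigma_finite_def
    by (auto intro: prob_space_imp_sigma_finite)
  show "prob_space (grid_space F D)"
    unfolding grid_space_def using p by (intro prob_space_PiM)
qed

lemma Ktilde_measurable:
  fixes F :: "'d::finite \<Rightarrow> real measure"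
  assumes F: "\<And>m. real_distribution (F m)" and l: "l < D"
  shows "(\<lambda>\<omega>. Ktilde \<omega> l s t) \<in> borel_measurable (grid_space F D)"
proof -
  have "(\<lambda>\<omega>. hh (s $ m) (t $ m) (\<omega> (l, m))) \<in> borel_measurable (grid_space F D)" for m
  proof -
    have "hh (s $ m) (t $ m) \<in> borel_measurable (wb_dist (F (snd (l, m))))"
      using hh_measurable by (simp add: F cong: measurable_cong_sets)
    then show ?thesis unfolding grid_space_def
      using l by (intro measurable_compose[OF measurable_component_singleton]) auto
  qed
  then show ?thesis unfolding Ktilde_prod by (intro borel_measurable_prod) auto
qed

lemma E_S:
  fixes F :: "'d::finite \<Rightarrow> real measure"
  assumes F: "\<And>m. real_distribution (F m)" and c: "\<And>m. cdf (F m) 0 = 0" and S: "S \<subseteq> {..<D}"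
  shows "(\<integral>\<omega>. (\<Prod>l\<in>S. Ktilde \<omega> l s t) \<partial>grid_space F D) = (tkernel F (s - t)) ^ card S"
proof -
  define M' where "M' = (\<lambda>lm::nat \<times> 'd. wb_dist (F (snd lm)))"
  define I where "I = {..<D} \<times> (UNIV :: 'd set)"
  define f where "f lm p = (if fst lm \<in> S then hh (s $ snd lm) (t $ snd lm) p else 1)" for lm p
  interpret product_prob_space M' I unfolding M'_def I_def by (rule grid_facts(1)[OF F c])
  have fin: "finite I" unfolding I_def by simp
  have eq: "(\<Prod>l\<in>S. Ktilde \<omega> l s t) = (\<Prod>lm\<in>I. f lm (\<omega> lm))" for \<omega>
  proof -
    have "(\<Prod>lm\<in>I. f lm (\<omega> lm)) = (\<Prod>l<D. \<Prod>m\<in>UNIV. f (l, m) (\<omega> (l, m)))"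
      unfolding I_def by (simp add: prod.cartesian_product)
    also have "\<dots> = (\<Prod>l<D. if l \<in> S then Ktilde \<omega> l s t else 1)"
      unfolding Ktilde_prod f_def by (intro prod.cong) auto
    also have "\<dots> = (\<Prod>l\<in>S. Ktilde \<omega> l s t)"
      using S by (subst prod.If_cases) (auto simp: Int_absorb1 intro: prod.neutral)
    finally show ?thesis ..
  qed
  have intf: "integrable (M' lm) (f lm)" for lm
  proof -
    have m: "f lm \<in> borel_measurable (M' lm)"
      unfolding f_def M'_def using hh_measurable by (simp add: F cong: measurable_cong_sets)
    show ?thesis
      by (rule M.integrable_const_bound[where B=1, OF _ m]) (auto simp: f_def hh_def)
  qed
  have "(\<integral>\<omega>. (\<Prod>l\<in>S. Ktilde \<omega> l s t) \<partial>grid_space F D) = (\<integral>\<omega>. (\<Prod>lm\<in>I. f lm (\<omega> lm)) \<partial>Pi\<^sub>M I M')"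
    unfolding eq grid_space_def M'_def I_def ..
  also have "\<dots> = (\<Prod>lm\<in>I. integral\<^sup>L (M' lm) (f lm))"
    by (rule product_integral_prod[OF fin intf])
  also have "\<dots> = (\<Prod>l<D. \<Prod>m\<in>UNIV. integral\<^sup>L (M' (l, m)) (f (l, m)))"
    unfolding I_def by (simp add: prod.cartesian_product)
  also have "\<dots> = (\<Prod>l<D. if l \<in> S then tkernel F (s - t) else 1)"
  proof (intro prod.cong refl)
    fix l
    show "(\<Prod>m\<in>UNIV. integral\<^sup>L (M' (l, m)) (f (l, m))) = (if l \<in> S then tkernel F (s - t) else 1)"
    proof (cases "l \<in> S")
      case True
      then show ?thesis
        unfolding tkernel_def f_def M'_def by (simp add: int_hh[OF F])
    next
      case False
      then show ?thesis unfolding f_def by (simp add: M.prob_space)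
    qed
  qed
  also have "\<dots> = (tkernel F (s - t)) ^ card S"
    using S by (subst prod.If_cases) (auto simp: Int_absorb1 intro: prod.neutral)
  finally show ?thesis .
qed

lemma moments:
  fixes F :: "'d::finite \<Rightarrow> real measure"
  assumes F: "\<And>m. real_distribution (F m)" and c: "\<And>m. cdf (F m) 0 = 0" and D: "D > 0"
  shows "(\<integral>\<omega>. (1 / real D) * (\<Sum>l<D. Ktilde \<omega> l s t) \<partial>grid_space F D) = tkernel F (s - t)"
    and "integrable (grid_space F D) (\<lambda>\<omega>. ((1 / real D) * (\<Sum>l<D. Ktilde \<omega> l s t) - tkernel F (s - t))^2)"
    and "(\<integral>\<omega>. ((1 / real D) * (\<Sum>l<D. Ktilde \<omega> l s t) - tkernel F (s - t))^2 \<partial>grid_space F D)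
       = (1 / real D) * (tkernel F (s - t) - (tkernel F (s - t))^2)"
proof -
  interpret P: prob_space "grid_space F D" by (rule grid_facts(2)[OF F c])
  define k where "k = tkernel F (s - t)"
  define X where "X l \<omega> = Ktilde \<omega> l s t" for l \<omega>
  have Xm: "X l \<in> borel_measurable (grid_space F D)" if "l < D" for l
    unfolding X_def[abs_def] by (rule Ktilde_measurable[OF F that])
  have X01: "X l \<omega> = 0 \<or> X l \<omega> = 1" for l \<omega> unfolding X_def by (rule Ktilde_01)
  have Xb: "\<bar>X l \<omega>\<bar> \<le> 1" for l \<omega> using X01[of l \<omega>] by auto
  have intX: "integrable (grid_space F D) (X l)" if "l < D" for l
    by (rule P.integrable_const_bound[where B=1, OF _ Xm[OF that]]) (auto simp: Xb)
  have intXX: "integrable (grid_space F D) (\<lambda>\<omega>. X l \<omega> * X l' \<omega>)" if "l < D" "l' < D" for l l'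
  proof (rule P.integrable_const_bound[where B=1])
    show "(\<lambda>\<omega>. X l \<omega> * X l' \<omega>) \<in> borel_measurable (grid_space F D)"
      using Xm that by measurable
    show "AE \<omega> in grid_space F D. norm (X l \<omega> * X l' \<omega>) \<le> 1"
    proof (rule AE_I2)
      fix \<omega> show "norm (X l \<omega> * X l' \<omega>) \<le> 1"
        using X01[of l \<omega>] X01[of l' \<omega>] by auto
    qed
  qed
  have EX: "(\<integral>\<omega>. X l \<omega> \<partial>grid_space F D) = k" if "l < D" for l
  proof -
    have "(\<integral>\<omega>. (\<Prod>i\<in>{l}. Ktilde \<omega> i s t) \<partial>grid_space F D) = k ^ card {l}"
      unfolding k_def using that by (intro E_S[OF F c]) auto
    then show ?thesis unfolding X_def by simp
  qed
  have EXX: "(\<integral>\<omega>. X l \<omega> * X l' \<omega> \<partial>grid_space F D) = (if l = l' then k else k^2)"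
    if "l < D" "l' < D" for l l'
  proof (cases "l = l'")
    case True
    have "X l \<omega> * X l' \<omega> = X l \<omega>" for \<omega> using X01[of l \<omega>] True by auto
    then have "(\<lambda>\<omega>. X l \<omega> * X l' \<omega>) = X l" by (rule ext)
    then show ?thesis using EX[OF that(1)] True by simp
  next
    case False
    have "(\<integral>\<omega>. X l \<omega> * X l' \<omega> \<partial>grid_space F D) = (\<integral>\<omega>. (\<Prod>i\<in>{l, l'}. Ktilde \<omega> i s t) \<partial>grid_space F D)"
      using False unfolding X_def by simp
    also have "\<dots> = k ^ card {l, l'}"
      unfolding k_def using that by (intro E_S[OF F c]) auto
    finally show ?thesis using False by (simp add: numeral_2_eq_2)
  qed
  define A where "A \<omega> = (1 / real D) * (\<Sum>l<D. X l \<omega>)" for \<omega>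
  have intA: "integrable (grid_space F D) A"
    unfolding A_def using intX by (intro integrable_mult_right integrable_sum) auto
  have EA: "(\<integral>\<omega>. A \<omega> \<partial>grid_space F D) = k"
  proof -
    have "(\<integral>\<omega>. A \<omega> \<partial>grid_space F D) = (1 / real D) * (\<Sum>l<D. \<integral>\<omega>. X l \<omega> \<partial>grid_space F D)"
      unfolding A_def using intX by (simp add: integral_sum)
    also have "\<dots> = k" using D by (simp add: EX)
    finally show ?thesis .
  qed
  then show "(\<integral>\<omega>. (1 / real D) * (\<Sum>l<D. Ktilde \<omega> l s t) \<partial>grid_space F D) = tkernel F (s - t)"
    unfolding A_def X_def k_def .
  define B where "B \<omega> = (\<Sum>l<D. \<Sum>l'<D. X l \<omega> * X l' \<omega>)" for \<omega>
  have intB: "integrable (grid_space F D) B"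
    unfolding B_def by (auto intro!: intXX Bochner_Integration.integrable_sum)
  have sq: "(A \<omega> - k)^2 = (1 / real D)^2 * B \<omega> - 2 * k * A \<omega> + k^2" for \<omega>
  proof -
    have "(\<Sum>l<D. X l \<omega>)^2 = B \<omega>"
      unfolding B_def power2_eq_square by (simp add: sum_product)
    then show ?thesis unfolding A_def by (simp add: power2_eq_square algebra_simps)
  qed
  have intS: "integrable (grid_space F D) (\<lambda>\<omega>. (A \<omega> - k)^2)"
    unfolding sq using intA intB by auto
  then show "integrable (grid_space F D) (\<lambda>\<omega>. ((1 / real D) * (\<Sum>l<D. Ktilde \<omega> l s t) - tkernel F (s - t))^2)"
    unfolding A_def X_def k_def .
  have inner: "(\<Sum>l'<D. if l = l' then k else k^2) = real D * k^2 + (k - k^2)" if "l < D" for l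
  proof -
    have "(\<Sum>l'<D. if l = l' then k else k^2) = (\<Sum>l'<D. k^2 + (if l = l' then k - k^2 else 0))"
      by (intro sum.cong) auto
    also have "\<dots> = real D * k^2 + (k - k^2)"
      using that by (simp add: sum.distrib)
    finally show ?thesis .
  qed
  have EB: "(\<integral>\<omega>. B \<omega> \<partial>grid_space F D) = real D * (real D * k^2 + (k - k^2))"
  proof -
    have "(\<integral>\<omega>. B \<omega> \<partial>grid_space F D) = (\<Sum>l<D. \<Sum>l'<D. \<integral>\<omega>. X l \<omega> * X l' \<omega> \<partial>grid_space F D)"
      unfolding B_def
      by (subst Bochner_Integration.integral_sum)
         (auto intro!: intXX sum.cong Bochner_Integration.integral_sum Bochner_Integration.integrable_sum)
    also have "\<dots> = (\<Sum>l<D. \<Sum>l'<D. if l = l' then k else k^2)"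
      by (intro sum.cong refl) (simp add: EXX)
    also have "\<dots> = (\<Sum>l<D. real D * k^2 + (k - k^2))"
      by (intro sum.cong refl) (simp add: inner)
    finally show ?thesis by simp
  qed
  have "(\<integral>\<omega>. (A \<omega> - k)^2 \<partial>grid_space F D) = (1 / real D)^2 * (\<integral>\<omega>. B \<omega> \<partial>grid_space F D) - 2 * k * (\<integral>\<omega>. A \<omega> \<partial>grid_space F D) + k^2"
    unfolding sq using intA intB by (simp add: P.prob_space)
  also have "\<dots> = (1 / real D) * (k - k^2)"
    unfolding EB EA using D by (simp add: field_simps power2_eq_square)
  finally show "(\<integral>\<omega>. ((1 / real D) * (\<Sum>l<D. Ktilde \<omega> l s t) - tkernel F (s - t))^2 \<partial>grid_space F D)
       = (1 / real D) * (tkernel F (s - t) - (tkernel F (s - t))^2)"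
    unfolding A_def X_def k_def .
qed

theorem theorem7:
  fixes F :: "'d::finite \<Rightarrow> real measure" and x :: "nat \<Rightarrow> real^'d" and n D :: nat
  assumes "\<And>m. real_distribution (F m)"
    and "\<And>m t. t \<le> 0 \<Longrightarrow> cdf (F m) t = 0"
    and "D > 0"
  defines "K \<equiv> \<lambda>i j. tkernel F (x i - x j)"
    and "Kbar \<equiv> \<lambda>\<omega> i j. (1 / real D) * (\<Sum>l<D. Ktilde \<omega> l (x i) (x j))"
  shows "(\<forall>i<n. \<forall>j<n. (\<integral>\<omega>. Kbar \<omega> i j \<partial>grid_space F D) = K i j)
    \<and> (\<integral>\<omega>. (\<Sum>i<n. \<Sum>j<n. (Kbar \<omega> i j - K i j)^2) \<partial>grid_space F D)
        = (1 / real D) * ((\<Sum>i<n. \<Sum>j<n. K i j) - (\<Sum>i<n. \<Sum>j<n. (K i j)^2))"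
proof -
  have F: "\<And>m. real_distribution (F m)" by (rule assms(1))
  have c: "\<And>m. cdf (F m) 0 = 0" using assms(2) by simp
  have D: "D > 0" by (rule assms(3))
  have m1: "(\<integral>\<omega>. Kbar \<omega> i j \<partial>grid_space F D) = K i j" for i j
    unfolding Kbar_def K_def by (rule moments(1)[OF F c D])
  have int2: "integrable (grid_space F D) (\<lambda>\<omega>. (Kbar \<omega> i j - K i j)^2)" for i j
    unfolding Kbar_def K_def by (rule moments(2)[OF F c D])
  have m2: "(\<integral>\<omega>. (Kbar \<omega> i j - K i j)^2 \<partial>grid_space F D) = (1 / real D) * (K i j - (K i j)^2)" for i j
    unfolding Kbar_def K_def by (rule moments(3)[OF F c D])
  have "(\<integral>\<omega>. (\<Sum>i<n. \<Sum>j<n. (Kbar \<omega> i j - K i j)^2) \<partial>grid_space F D)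
      = (\<Sum>i<n. \<Sum>j<n. \<integral>\<omega>. (Kbar \<omega> i j - K i j)^2 \<partial>grid_space F D)"
    by (subst Bochner_Integration.integral_sum)
       (auto intro!: int2 sum.cong Bochner_Integration.integral_sum Bochner_Integration.integrable_sum)
  also have "\<dots> = (\<Sum>i<n. \<Sum>j<n. (1 / real D) * (K i j - (K i j)^2))"
    by (simp add: m2)
  also have "\<dots> = (1 / real D) * ((\<Sum>i<n. \<Sum>j<n. K i j) - (\<Sum>i<n. \<Sum>j<n. (K i j)^2))"
    by (simp only: sum_distrib_left sum_subtractf[symmetric] right_diff_distrib)
  finally show ?thesis using m1 by blast
qed

end
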